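(* Let $N,M$ be normal subgroups of a group $G$, with $N$ abelian of finite exponent. (i) If $\exp(N)$ is odd, then $\exp(N\otimes M)$ divides $\exp(N)$. (ii) If $\exp(N)$ is even, then $\exp(N\otimes M)$ divides $2\exp(N)$.
   Context: Conventions: ${}^g h = ghg^{-1}$. For normal subgroups $N,M$ of $G$ acting on each other by conjugation, $N\otimes M$ is the group generated by symbols $n\otimes m$ ($n\in N$, $m\in M$) subject to $nn'\otimes m=({}^n n'\otimes {}^n m)(n\otimes m)$ and $n\otimes mm'=(n\otimes m)({}^m n\otimes {}^m m')$. *)

theory Defs
  imports "HOL-Algebra.Algebra"
begin

definition conj :: "('g, 'b) monoid_scheme \<Rightarrow> 'g \<Rightarrow> 'g \<Rightarrow> 'g" where
  "conj G g h = g \<otimes>\<^bsub>G\<^esub> h \<otimes>\<^bsub>G\<^esub> inv\<^bsub>G\<^esub> g"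

definition group_exponent :: "('a, 'b) monoid_scheme \<Rightarrow> nat" where
  "group_exponent H = (if \<exists>e::nat>0. \<forall>x\<in>carrier H. x [^]\<^bsub>H\<^esub> e = \<one>\<^bsub>H\<^esub>
     then (LEAST e::nat. e > 0 \<and> (\<forall>x\<in>carrier H. x [^]\<^bsub>H\<^esub> e = \<one>\<^bsub>H\<^esub>)) else 0)"

text \<open>Words in the free group on symbols n \<otimes> m: a letter (n, m, True) is the generator
  n \<otimes> m, a letter (n, m, False) is its inverse.\<close>
type_synonym 'g tword = "('g \<times> 'g \<times> bool) list"

definition tword_ok :: "'g set \<Rightarrow> 'g set \<Rightarrow> 'g tword \<Rightarrow> bool" where
  "tword_ok N M w \<longleftrightarrow> (\<forall>(n, m, b) \<in> set w. n \<in> N \<and> m \<in> M)"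

inductive tens_eq :: "('g, 'b) monoid_scheme \<Rightarrow> 'g set \<Rightarrow> 'g set \<Rightarrow> 'g tword \<Rightarrow> 'g tword \<Rightarrow> bool"
  for G N M where
  refl: "tens_eq G N M w w"
| sym: "tens_eq G N M u v \<Longrightarrow> tens_eq G N M v u"
| trans: "tens_eq G N M u v \<Longrightarrow> tens_eq G N M v w \<Longrightarrow> tens_eq G N M u w"
| cong: "tens_eq G N M u v \<Longrightarrow> tword_ok N M x \<Longrightarrow> tword_ok N M y \<Longrightarrow>
           tens_eq G N M (x @ u @ y) (x @ v @ y)"
| cancel: "n \<in> N \<Longrightarrow> m \<in> M \<Longrightarrow> tens_eq G N M [(n, m, b), (n, m, \<not> b)] []"
| rel_left: "n \<in> N \<Longrightarrow> n' \<in> N \<Longrightarrow> m \<in> M \<Longrightarrow>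
     tens_eq G N M [(n \<otimes>\<^bsub>G\<^esub> n', m, True)]
                   [(conj G n n', conj G n m, True), (n, m, True)]"
| rel_right: "n \<in> N \<Longrightarrow> m \<in> M \<Longrightarrow> m' \<in> M \<Longrightarrow>
     tens_eq G N M [(n, m \<otimes>\<^bsub>G\<^esub> m', True)]
                   [(n, m, True), (conj G m n, conj G m m', True)]"

definition tensor_carrier :: "('g, 'b) monoid_scheme \<Rightarrow> 'g set \<Rightarrow> 'g set \<Rightarrow> 'g tword set set" where
  "tensor_carrier G N M = (\<lambda>w. {v. tens_eq G N M w v}) ` {w. tword_ok N M w}"

definition tensor_mult :: "('g, 'b) monoid_scheme \<Rightarrow> 'g set \<Rightarrow> 'g set \<Rightarrow> 'g tword set \<Rightarrow> 'g tword set \<Rightarrow> 'g tword set" where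
  "tensor_mult G N M A B = {v. \<exists>a\<in>A. \<exists>b\<in>B. tens_eq G N M (a @ b) v}"

definition tensor_grp :: "('g, 'b) monoid_scheme \<Rightarrow> 'g set \<Rightarrow> 'g set \<Rightarrow> 'g tword set monoid" where
  "tensor_grp G N M = \<lparr>carrier = tensor_carrier G N M, monoid.mult = tensor_mult G N M,
      one = {v. tens_eq G N M [] v}\<rparr>"

end

theory Submission
  imports Defs
begin


context group begin

lemma inv_cancel_l1 [simp]: "g \<in> carrier G \<Longrightarrow> z \<in> carrier G \<Longrightarrow> inv g \<otimes> (g \<otimes> z) = z"
  by (simp add: m_assoc[symmetric])
lemma inv_cancel_l2 [simp]: "g \<in> carrier G \<Longrightarrow> z \<in> carrier G \<Longrightarrow> g \<otimes> (inv g \<otimes> z) = z"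
  by (simp add: m_assoc[symmetric])

definition cent where "cent z \<longleftrightarrow> z \<in> carrier G \<and> (\<forall>y\<in>carrier G. z \<otimes> y = y \<otimes> z)"

lemma cent_one: "cent \<one>" by (simp add: cent_def)

lemma cent_mult: "cent a \<Longrightarrow> cent b \<Longrightarrow> cent (a \<otimes> b)"
  unfolding cent_def by (metis m_assoc m_closed)

lemma cent_pow: "cent a \<Longrightarrow> cent (a [^] (k::nat))"
  by (induct k) (auto simp: cent_one cent_mult)

lemma cent_swap: "cent z \<Longrightarrow> a \<in> carrier G \<Longrightarrow> b \<in> carrier G \<Longrightarrow> a \<otimes> (z \<otimes> b) = z \<otimes> (a \<otimes> b)"
  unfolding cent_def by (metis m_assoc)

lemma pow_aux:
  assumes x: "x \<in> carrier G" and y: "y \<in> carrier G" and w: "cent w"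
    and yx: "y \<otimes> x = w \<otimes> x \<otimes> y"
  shows "y [^] (k::nat) \<otimes> x = w [^] k \<otimes> x \<otimes> y [^] k"
proof (induction k)
  case 0 then show ?case using x by simp
next
  case (Suc k)
  have wc: "w \<in> carrier G" using w cent_def by auto
  have "y [^] Suc k \<otimes> x = y [^] k \<otimes> (y \<otimes> x)" using x y by (simp add: m_assoc)
  also have "\<dots> = y [^] k \<otimes> (w \<otimes> (x \<otimes> y))" using yx x y wc by (simp add: m_assoc)
  also have "\<dots> = w \<otimes> (y [^] k \<otimes> x \<otimes> y)" using cent_swap[OF w] x y wc by (simp add: m_assoc)
  also have "\<dots> = w \<otimes> (w [^] k \<otimes> x \<otimes> y [^] k \<otimes> y)" using Suc by simp
  also have "\<dots> = (w \<otimes> w [^] k) \<otimes> x \<otimes> (y [^] k \<otimes> y)" using x y wc by (simp add: m_assoc)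
  also have "\<dots> = w [^] Suc k \<otimes> x \<otimes> y [^] Suc k" using wc by (metis nat_pow_Suc nat_pow_Suc2)
  finally show ?case .
qed

lemma pow_formula:
  assumes x: "x \<in> carrier G" and y: "y \<in> carrier G" and w: "cent w"
    and yx: "y \<otimes> x = w \<otimes> x \<otimes> y"
  shows "(x \<otimes> y) [^] (k::nat) = x [^] k \<otimes> y [^] k \<otimes> w [^] (k * (k - 1) div 2)"
proof (induction k)
  case 0 then show ?case by simp
next
  case (Suc k)
  have wc: "w \<in> carrier G" using w cent_def by auto
  define W where "W = w [^] (k * (k - 1) div 2)"
  have W: "cent W" unfolding W_def by (rule cent_pow[OF w])
  have Wc: "W \<in> carrier G" using W cent_def by auto
  have ar: "Suc k * (Suc k - 1) div 2 = k + k * (k - 1) div 2"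
    by (cases k) auto
  have "(x \<otimes> y) [^] Suc k = x [^] k \<otimes> y [^] k \<otimes> W \<otimes> (x \<otimes> y)" using Suc W_def by simp
  also have "\<dots> = x [^] k \<otimes> (y [^] k \<otimes> x) \<otimes> y \<otimes> W"
    using x y Wc W unfolding cent_def by (simp add: m_assoc)
  also have "\<dots> = x [^] k \<otimes> (w [^] k \<otimes> x \<otimes> y [^] k) \<otimes> y \<otimes> W"
    using pow_aux[OF x y w yx] by simp
  also have "\<dots> = x [^] Suc k \<otimes> y [^] Suc k \<otimes> (w [^] k \<otimes> W)"
    using x y Wc wc cent_pow[OF w, of k] unfolding cent_def by (simp add: m_assoc)
  also have "w [^] k \<otimes> W = w [^] (Suc k * (Suc k - 1) div 2)"
    unfolding W_def ar using wc by (simp add: nat_pow_mult)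
  finally show ?case .
qed

definition Zc where "Zc e z \<longleftrightarrow> cent z \<and> z [^] (e::nat) = \<one>"

lemma Zc_mult: "Zc e a \<Longrightarrow> Zc e b \<Longrightarrow> Zc e (a \<otimes> b)"
proof -
  assume a: "Zc e a" and b: "Zc e b"
  then have ac0: "cent a" "cent b" "a [^] e = \<one>" "b [^] e = \<one>" unfolding Zc_def by auto
  then have ac1: "a \<in> carrier G" "b \<in> carrier G" unfolding cent_def by auto
  have "a \<otimes> b = b \<otimes> a" using ac0(1) ac1 unfolding cent_def by blast
  note ac = ac1 this ac0
  then show ?thesis unfolding Zc_def using cent_mult pow_mult_distrib[OF ac(3) ac(1,2)] by simp
qed

lemma exp_gen:
  assumes S: "S \<subseteq> carrier G"
    and ind: "\<And>P x. P \<one> \<Longrightarrow> (\<And>s x. s \<in> S \<Longrightarrow> x \<in> carrier G \<Longrightarrow> P x \<Longrightarrow> P (s \<otimes> x))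
               \<Longrightarrow> x \<in> carrier G \<Longrightarrow> P x"
    and comm: "\<And>s s'. s \<in> S \<Longrightarrow> s' \<in> S \<Longrightarrow> Zc e (s \<otimes> s' \<otimes> inv s \<otimes> inv s')"
    and pw: "\<And>s. s \<in> S \<Longrightarrow> s [^] (E::nat) = \<one>"
    and dv: "e dvd (E * (E - 1) div 2)"
    and xc: "x \<in> carrier G"
  shows "x [^] E = \<one>"
proof -
  have step1: "\<forall>s\<in>S. Zc e (x \<otimes> s \<otimes> inv x \<otimes> inv s)" if "x \<in> carrier G" for x
    using that
  proof (induction x rule: ind)
    case 1 show ?case using S by (auto simp: Zc_def cent_one)
  next
    case (2 s' x)
    show ?case
    proof
      fix s assume s: "s \<in> S"
      have sc: "s \<in> carrier G" "s' \<in> carrier G" using s 2 S by auto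
      define c where "c = x \<otimes> s \<otimes> inv x \<otimes> inv s"
      have cc: "Zc e c" using 2 s c_def by auto
      have c2: "cent c" using cc Zc_def by auto
      have ccar: "c \<in> carrier G" using c2 cent_def by auto
      have xs: "x \<otimes> s \<otimes> inv x = c \<otimes> s" unfolding c_def using sc 2 by (simp add: m_assoc)
      have "s' \<otimes> x \<otimes> s \<otimes> inv (s' \<otimes> x) \<otimes> inv s = s' \<otimes> (x \<otimes> s \<otimes> inv x) \<otimes> inv s' \<otimes> inv s"
        using sc 2 by (simp add: m_assoc inv_mult_group)
      also have "\<dots> = s' \<otimes> (c \<otimes> s) \<otimes> inv s' \<otimes> inv s" using xs by simp
      also have "\<dots> = c \<otimes> (s' \<otimes> s \<otimes> inv s' \<otimes> inv s)"
        using sc ccar cent_swap[OF c2] by (simp add: m_assoc)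
      finally show "Zc e (s' \<otimes> x \<otimes> s \<otimes> inv (s' \<otimes> x) \<otimes> inv s)"
        using Zc_mult[OF cc comm[OF \<open>s' \<in> S\<close> s]] by simp
    qed
  qed (use that in simp)
  show ?thesis using xc
  proof (induction x rule: ind)
    case 1 show ?case by simp
  next
    case (2 s x)
    have sc: "s \<in> carrier G" using 2 S by auto
    define w where "w = x \<otimes> s \<otimes> inv x \<otimes> inv s"
    have wz: "Zc e w" using step1 2 w_def by auto
    have wc: "cent w" "w [^] e = \<one>" using wz Zc_def by auto
    have wcar: "w \<in> carrier G" using wc cent_def by auto
    have xs: "x \<otimes> s = w \<otimes> s \<otimes> x" unfolding w_def using sc 2 by (simp add: m_assoc)
    have "(s \<otimes> x) [^] E = s [^] E \<otimes> x [^] E \<otimes> w [^] (E * (E - 1) div 2)"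
      by (rule pow_formula[OF sc \<open>x \<in> carrier G\<close> wc(1) xs])
    also obtain q where "E * (E - 1) div 2 = e * q" using dv by auto
    then have "w [^] (E * (E - 1) div 2) = \<one>" using wc wcar by (simp add: nat_pow_pow[symmetric])
    finally show ?case using pw 2 by simp
  qed (use xc in simp)
qed

lemma exp_dvd:
  assumes E: "0 < E" and h: "\<And>x. x \<in> carrier G \<Longrightarrow> x [^] (E::nat) = \<one>"
  shows "group_exponent G dvd E"
proof -
  have ex: "\<exists>e::nat>0. \<forall>x\<in>carrier G. x [^] e = \<one>" using E h by auto
  define L where "L = (LEAST e::nat. e > 0 \<and> (\<forall>x\<in>carrier G. x [^] e = \<one>))"
  have gL: "group_exponent G = L" unfolding group_exponent_def L_def using ex by simp
  have L: "L > 0 \<and> (\<forall>x\<in>carrier G. x [^] L = \<one>)"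
    unfolding L_def by (rule LeastI_ex) (use ex in auto)
  have r: "x [^] (E mod L) = \<one>" if "x \<in> carrier G" for x
  proof -
    have "x [^] E = x [^] (L * (E div L) + E mod L)" by simp
    also have "\<dots> = (x [^] L) [^] (E div L) \<otimes> x [^] (E mod L)"
      using that by (simp add: nat_pow_mult nat_pow_pow)
    finally show ?thesis using that h L by simp
  qed
  have "E mod L = 0"
  proof (rule ccontr)
    assume "E mod L \<noteq> 0"
    then have "0 < E mod L \<and> (\<forall>x\<in>carrier G. x [^] (E mod L) = \<one>)" using r by auto
    then have "L \<le> E mod L" unfolding L_def by (rule Least_le)
    moreover have "E mod L < L" using L by simp
    ultimately show False by simp
  qed
  then show ?thesis using gL by auto
qed

end


locale tctx = group +
  fixes N M :: "'a set"
  assumes nN: "N \<lhd> G" and nM: "M \<lhd> G"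
begin

abbreviation teq where "teq \<equiv> tens_eq G N M"
abbreviation ok where "ok \<equiv> tword_ok N M"
definition cls where "cls w = {v. teq w v}"
abbreviation T where "T \<equiv> tensor_grp G N M"

lemma N_sub: "N \<subseteq> carrier G" by (rule subgroup.subset[OF normal_imp_subgroup[OF nN]])
lemma M_sub: "M \<subseteq> carrier G" by (rule subgroup.subset[OF normal_imp_subgroup[OF nM]])

lemma conj_N: "g \<in> carrier G \<Longrightarrow> n \<in> N \<Longrightarrow> conj G g n \<in> N"
  unfolding conj_def by (rule normal.inv_op_closed2[OF nN])
lemma conj_M: "g \<in> carrier G \<Longrightarrow> n \<in> M \<Longrightarrow> conj G g n \<in> M"
  unfolding conj_def by (rule normal.inv_op_closed2[OF nM])

lemma ok_simps[simp]: "ok [] = True" "ok (a # w) = (fst a \<in> N \<and> fst (snd a) \<in> M \<and> ok w)"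
  "ok (u @ v) = (ok u \<and> ok v)"
  by (auto simp: tword_ok_def split: prod.splits)

lemma ok_pres: "teq u v \<Longrightarrow> ok u = ok v"
proof (induction rule: tens_eq.induct)
  case (rel_left n n' m)
  have "n \<otimes>\<^bsub>G\<^esub> n' \<in> N" using subgroup.m_closed[OF normal_imp_subgroup[OF nN]] rel_left by blast
  moreover have "conj G n n' \<in> N" "conj G n m \<in> M" using conj_N conj_M N_sub rel_left by auto
  ultimately show ?case using rel_left by simp
next
  case (rel_right n m m')
  have "m \<otimes>\<^bsub>G\<^esub> m' \<in> M" using subgroup.m_closed[OF normal_imp_subgroup[OF nM]] rel_right by blast
  moreover have "conj G m n \<in> N" "conj G m m' \<in> M" using conj_N conj_M M_sub rel_right by auto
  ultimately show ?case using rel_right by simp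
qed auto

lemma cls_eq: "cls u = cls v \<longleftrightarrow> teq u v"
  unfolding cls_def using tens_eq.refl tens_eq.sym tens_eq.trans by blast

lemma teq_app: "teq a a' \<Longrightarrow> teq b b' \<Longrightarrow> ok a \<Longrightarrow> ok b \<Longrightarrow> teq (a @ b) (a' @ b')"
proof -
  assume h: "teq a a'" "teq b b'" "ok a" "ok b"
  have "teq ([] @ a @ b) ([] @ a' @ b)" using h by (intro tens_eq.cong) auto
  moreover have "teq (a' @ b @ []) (a' @ b' @ [])" using h ok_pres[of a a'] by (intro tens_eq.cong) auto
  ultimately show ?thesis using tens_eq.trans by fastforce
qed

lemma T_carrier: "carrier T = cls ` {w. ok w}"
  by (simp add: tensor_grp_def tensor_carrier_def cls_def[abs_def] tword_ok_def)

lemma T_mult: "ok a \<Longrightarrow> ok b \<Longrightarrow> cls a \<otimes>\<^bsub>T\<^esub> cls b = cls (a @ b)"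
  unfolding tensor_grp_def tensor_mult_def cls_def
  apply (auto intro: tens_eq.refl)
  by (metis ok_pres teq_app tens_eq.trans)

lemma T_one: "\<one>\<^bsub>T\<^esub> = cls []"
  by (simp add: tensor_grp_def cls_def)

definition iw :: "'g tword \<Rightarrow> 'g tword" where
  "iw w = rev (map (\<lambda>(n, m, b). (n, m, \<not> b)) w)"

lemma iw_ok: "ok (iw w) = ok w"
  by (auto simp: iw_def tword_ok_def)

lemma iw_cancel: "ok w \<Longrightarrow> teq (iw w @ w) []"
proof (induction w)
  case Nil then show ?case by (simp add: iw_def tens_eq.refl)
next
  case (Cons a w)
  obtain n m b where a: "a = (n, m, b)" by (cases a) auto
  have iwc: "iw (a # w) = iw w @ [(n, m, \<not> b)]" by (simp add: iw_def a)
  have c: "teq [(n, m, \<not> b), (n, m, b)] []"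
    using tens_eq.cancel[where n=n and m=m and b="\<not> b" and G=G and N=N and M=M] Cons.prems a by simp
  have "teq (iw w @ [(n, m, \<not> b), (n, m, b)] @ w) (iw w @ [] @ w)"
    using Cons.prems a iw_ok by (intro tens_eq.cong[OF c]) auto
  then have "teq (iw (a # w) @ a # w) (iw w @ w)" by (simp add: a iw_def)
  then show ?case using Cons tens_eq.trans by auto
qed

lemma T_group: "group T"
proof (rule groupI)
  fix x y assume "x \<in> carrier T" "y \<in> carrier T"
  then show "x \<otimes>\<^bsub>T\<^esub> y \<in> carrier T" by (auto simp: T_carrier T_mult)
next
  show "\<one>\<^bsub>T\<^esub> \<in> carrier T" by (auto simp: T_carrier T_one)
next
  fix x y z assume "x \<in> carrier T" "y \<in> carrier T" "z \<in> carrier T"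
  then show "x \<otimes>\<^bsub>T\<^esub> y \<otimes>\<^bsub>T\<^esub> z = x \<otimes>\<^bsub>T\<^esub> (y \<otimes>\<^bsub>T\<^esub> z)" by (auto simp: T_carrier T_mult)
next
  fix x assume "x \<in> carrier T"
  then show "\<one>\<^bsub>T\<^esub> \<otimes>\<^bsub>T\<^esub> x = x" by (auto simp: T_carrier T_mult T_one)
next
  fix x assume "x \<in> carrier T"
  then obtain w where w: "ok w" "x = cls w" by (auto simp: T_carrier)
  show "\<exists>y\<in>carrier T. y \<otimes>\<^bsub>T\<^esub> x = \<one>\<^bsub>T\<^esub>"
    using w iw_cancel[OF w(1)] iw_ok by (intro bexI[of _ "cls (iw w)"]) (auto simp: T_carrier T_mult T_one cls_eq)
qed

sublocale TG: group "tensor_grp G N M" by (rule T_group)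

end


context tctx begin

lemma N_mult: "a \<in> N \<Longrightarrow> b \<in> N \<Longrightarrow> a \<otimes> b \<in> N"
  using subgroup.m_closed[OF normal_imp_subgroup[OF nN]] by blast
lemma M_mult: "a \<in> M \<Longrightarrow> b \<in> M \<Longrightarrow> a \<otimes> b \<in> M"
  using subgroup.m_closed[OF normal_imp_subgroup[OF nM]] by blast
lemma N_inv: "a \<in> N \<Longrightarrow> inv a \<in> N"
  using subgroup.m_inv_closed[OF normal_imp_subgroup[OF nN]] by blast
lemma M_inv: "a \<in> M \<Longrightarrow> inv a \<in> M"
  using subgroup.m_inv_closed[OF normal_imp_subgroup[OF nM]] by blast
lemma N_one: "\<one> \<in> N"
  using subgroup.one_closed[OF normal_imp_subgroup[OF nN]] by blast
lemma M_one: "\<one> \<in> M"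
  using subgroup.one_closed[OF normal_imp_subgroup[OF nM]] by blast
lemma N_c: "a \<in> N \<Longrightarrow> a \<in> carrier G" using N_sub by blast
lemma M_c: "a \<in> M \<Longrightarrow> a \<in> carrier G" using M_sub by blast
lemma N_pow: "a \<in> N \<Longrightarrow> a [^] (j::nat) \<in> N"
  by (induct j) (auto simp: N_one N_mult)

lemmas memb = N_mult M_mult N_inv M_inv N_one M_one N_c M_c N_pow conj_N conj_M

lemma conj_c: "g \<in> carrier G \<Longrightarrow> x \<in> carrier G \<Longrightarrow> conj G g x \<in> carrier G"
  by (simp add: conj_def)
lemma conj_mult: "g \<in> carrier G \<Longrightarrow> h \<in> carrier G \<Longrightarrow> x \<in> carrier G \<Longrightarrow>
   conj G (g \<otimes> h) x = conj G g (conj G h x)"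
  by (simp add: conj_def m_assoc inv_mult_group)
lemma conj_hom: "g \<in> carrier G \<Longrightarrow> x \<in> carrier G \<Longrightarrow> y \<in> carrier G \<Longrightarrow>
   conj G g (x \<otimes> y) = conj G g x \<otimes> conj G g y"
  by (simp add: conj_def m_assoc)
lemma conj_one1: "x \<in> carrier G \<Longrightarrow> conj G \<one> x = x"
  by (simp add: conj_def)
lemma conj_inv_conj: "g \<in> carrier G \<Longrightarrow> x \<in> carrier G \<Longrightarrow> conj G (inv g) (conj G g x) = x"
  by (simp add: conj_def m_assoc)
lemma conj_self: "g \<in> carrier G \<Longrightarrow> conj G g g = g"
  by (simp add: conj_def m_assoc)

definition t where "t n m = cls [(n, m, True)]"

lemma t_car: "n \<in> N \<Longrightarrow> m \<in> M \<Longrightarrow> t n m \<in> carrier T"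
  unfolding t_def T_carrier by auto

lemma TL: "n \<in> N \<Longrightarrow> n' \<in> N \<Longrightarrow> m \<in> M \<Longrightarrow>
   t (n \<otimes> n') m = t (conj G n n') (conj G n m) \<otimes>\<^bsub>T\<^esub> t n m"
  unfolding t_def using tens_eq.rel_left[of n N n' m M G] N_sub
  by (subst T_mult) (auto simp: cls_eq conj_N conj_M)

lemma TR: "n \<in> N \<Longrightarrow> m \<in> M \<Longrightarrow> m' \<in> M \<Longrightarrow>
   t n (m \<otimes> m') = t n m \<otimes>\<^bsub>T\<^esub> t (conj G m n) (conj G m m')"
  unfolding t_def using tens_eq.rel_right[of n N m M m' G] M_sub
  by (subst T_mult) (auto simp: cls_eq conj_N conj_M)

lemma t_one: "m \<in> M \<Longrightarrow> t \<one> m = \<one>\<^bsub>T\<^esub>"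
proof -
  assume m: "m \<in> M"
  have "t (\<one> \<otimes> \<one>) m = t (conj G \<one> \<one>) (conj G \<one> m) \<otimes>\<^bsub>T\<^esub> t \<one> m"
    using TL[OF N_one N_one m] .
  then have "t \<one> m = t \<one> m \<otimes>\<^bsub>T\<^esub> t \<one> m" using m by (simp add: conj_one1 M_c)
  then show ?thesis using t_car[OF N_one m] by (metis TG.l_cancel_one')
qed

lemma t_inv: "n \<in> N \<Longrightarrow> m \<in> M \<Longrightarrow> cls [(n, m, False)] = t (inv n) (conj G n m)"
proof -
  assume n: "n \<in> N" and m: "m \<in> M"
  have c1: "cls [(n, m, False)] \<in> carrier T" unfolding T_carrier using n m by auto
  have "cls [(n, m, False)] \<otimes>\<^bsub>T\<^esub> t n m = cls ([(n, m, False)] @ [(n, m, True)])"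
    unfolding t_def using n m by (simp add: T_mult)
  also have "\<dots> = \<one>\<^bsub>T\<^esub>" unfolding T_one cls_eq
    using tens_eq.cancel[OF n m, where b=False and G=G] by simp
  finally have e1: "cls [(n, m, False)] \<otimes>\<^bsub>T\<^esub> t n m = \<one>\<^bsub>T\<^esub>" .
  have "t (n \<otimes> inv n) m = t (conj G n (inv n)) (conj G n m) \<otimes>\<^bsub>T\<^esub> t n m"
    using TL[OF n N_inv[OF n] m] .
  moreover have "conj G n (inv n) = inv n" using n N_c by (simp add: conj_def m_assoc)
  ultimately have e2: "t (inv n) (conj G n m) \<otimes>\<^bsub>T\<^esub> t n m = \<one>\<^bsub>T\<^esub>"
    using n m N_c t_one by simp
  show ?thesis using e1 e2 c1 t_car[OF N_inv[OF n] conj_M[OF N_c[OF n] m]] t_car[OF n m]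
    by (metis TG.r_cancel)
qed

definition S where "S = {t n m | n m. n \<in> N \<and> m \<in> M}"

lemma S_sub: "S \<subseteq> carrier T" unfolding S_def using t_car by auto

lemma gen_ind:
  assumes P1: "P \<one>\<^bsub>T\<^esub>"
    and Ps: "\<And>s x. s \<in> S \<Longrightarrow> x \<in> carrier T \<Longrightarrow> P x \<Longrightarrow> P (s \<otimes>\<^bsub>T\<^esub> x)"
    and x: "x \<in> carrier T"
  shows "P x"
proof -
  obtain w where w: "ok w" "x = cls w" using x T_carrier by auto
  have "P (cls w)" using w(1)
  proof (induction w)
    case Nil then show ?case using P1 T_one by simp
  next
    case (Cons a w)
    obtain n m b where a: "a = (n, m, b)" by (cases a) auto
    have nm: "n \<in> N" "m \<in> M" "ok w" using Cons.prems a by auto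
    have wc: "cls w \<in> carrier T" unfolding T_carrier using nm by auto
    have split: "cls (a # w) = cls [a] \<otimes>\<^bsub>T\<^esub> cls w" using T_mult[of "[a]" w] nm a by simp
    have "cls [a] \<in> S"
    proof (cases b)
      case True then show ?thesis unfolding S_def t_def using nm a by auto
    next
      case False then show ?thesis unfolding S_def
        using nm a t_inv[OF nm(1,2)] conj_M[OF N_c[OF nm(1)] nm(2)] N_inv[OF nm(1)] by auto
    qed
    then show ?case using split Ps wc Cons nm by simp
  qed
  then show ?thesis using w by simp
qed

lemma conj_conj: "g \<in> carrier G \<Longrightarrow> h \<in> carrier G \<Longrightarrow> x \<in> carrier G \<Longrightarrow>
   conj G (conj G g h) (conj G g x) = conj G (g \<otimes> h) x"
  by (simp add: conj_def m_assoc inv_mult_group)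

lemma GI:
  assumes n: "n \<in> N" and m: "m \<in> M" and n': "n' \<in> N" and m': "m' \<in> M"
  shows "t (conj G (n \<otimes> m) n') (conj G (n \<otimes> m) m') \<otimes>\<^bsub>T\<^esub> t n m
       = t n m \<otimes>\<^bsub>T\<^esub> t (conj G (m \<otimes> n) n') (conj G (m \<otimes> n) m')"
proof -
  have c: "n \<in> carrier G" "m \<in> carrier G" "n' \<in> carrier G" "m' \<in> carrier G"
    using n m n' m' memb by auto
  let ?c = "conj G"
  define pA where "pA = t (?c n n') (?c n m)"
  define pB where "pB = t (?c m n) (?c m m')"
  define pX where "pX = t (?c (n \<otimes> m) n') (?c (n \<otimes> m) m')"
  define pY where "pY = t (?c (m \<otimes> n) n') (?c (m \<otimes> n) m')"
  define s where "s = t n m"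
  have mem: "?c n n' \<in> N" "?c n m \<in> M" "?c n m' \<in> M" "?c m n \<in> N" "?c m n' \<in> N" "?c m m' \<in> M"
    "?c (n \<otimes> m) n' \<in> N" "?c (n \<otimes> m) m' \<in> M" "?c (m \<otimes> n) n' \<in> N" "?c (m \<otimes> n) m' \<in> M"
    using c n m n' m' by (auto simp: conj_N conj_M)
  have car: "pA \<in> carrier T" "pB \<in> carrier T" "pX \<in> carrier T" "pY \<in> carrier T" "s \<in> carrier T"
    unfolding pA_def pB_def pX_def pY_def s_def using mem n m by (auto intro: t_car)
  have W1: "t (n \<otimes> n') (m \<otimes> m') = pA \<otimes>\<^bsub>T\<^esub> pX \<otimes>\<^bsub>T\<^esub> (s \<otimes>\<^bsub>T\<^esub> pB)"
  proof -
    have "t (n \<otimes> n') (m \<otimes> m') = t (?c n n') (?c n (m \<otimes> m')) \<otimes>\<^bsub>T\<^esub> t n (m \<otimes> m')"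
      using TL[OF n n' M_mult[OF m m']] .
    also have "?c n (m \<otimes> m') = ?c n m \<otimes> ?c n m'" using c by (simp add: conj_hom)
    also have "t (?c n n') (?c n m \<otimes> ?c n m') = pA \<otimes>\<^bsub>T\<^esub> t (?c (?c n m) (?c n n')) (?c (?c n m) (?c n m'))"
      unfolding pA_def by (rule TR[OF mem(1) mem(2) mem(3)])
    also have "t (?c (?c n m) (?c n n')) (?c (?c n m) (?c n m')) = pX"
      unfolding pX_def using c by (simp add: conj_conj)
    also have "t n (m \<otimes> m') = s \<otimes>\<^bsub>T\<^esub> pB" unfolding s_def pB_def using TR[OF n m m'] .
    finally show ?thesis .
  qed
  have W2: "t (n \<otimes> n') (m \<otimes> m') = pA \<otimes>\<^bsub>T\<^esub> s \<otimes>\<^bsub>T\<^esub> (pY \<otimes>\<^bsub>T\<^esub> pB)"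
  proof -
    have "t (n \<otimes> n') (m \<otimes> m') = t (n \<otimes> n') m \<otimes>\<^bsub>T\<^esub> t (?c m (n \<otimes> n')) (?c m m')"
      using TR[OF N_mult[OF n n'] m m'] .
    also have "t (n \<otimes> n') m = pA \<otimes>\<^bsub>T\<^esub> s" unfolding pA_def s_def using TL[OF n n' m] .
    also have "?c m (n \<otimes> n') = ?c m n \<otimes> ?c m n'" using c by (simp add: conj_hom)
    also have "t (?c m n \<otimes> ?c m n') (?c m m') = t (?c (?c m n) (?c m n')) (?c (?c m n) (?c m m')) \<otimes>\<^bsub>T\<^esub> pB"
      unfolding pB_def by (rule TL[OF mem(4) mem(5) mem(6)])
    also have "t (?c (?c m n) (?c m n')) (?c (?c m n) (?c m m')) = pY"
      unfolding pY_def using c by (simp add: conj_conj)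
    finally show ?thesis .
  qed
  have "pA \<otimes>\<^bsub>T\<^esub> (pX \<otimes>\<^bsub>T\<^esub> s \<otimes>\<^bsub>T\<^esub> pB) = pA \<otimes>\<^bsub>T\<^esub> (s \<otimes>\<^bsub>T\<^esub> pY \<otimes>\<^bsub>T\<^esub> pB)"
  proof -
    have e: "pA \<otimes>\<^bsub>T\<^esub> pX \<otimes>\<^bsub>T\<^esub> (s \<otimes>\<^bsub>T\<^esub> pB) = pA \<otimes>\<^bsub>T\<^esub> s \<otimes>\<^bsub>T\<^esub> (pY \<otimes>\<^bsub>T\<^esub> pB)"
      using W1 W2 by simp
    show ?thesis using e car by (metis TG.m_assoc TG.m_closed)
  qed
  then have "pX \<otimes>\<^bsub>T\<^esub> s \<otimes>\<^bsub>T\<^esub> pB = s \<otimes>\<^bsub>T\<^esub> pY \<otimes>\<^bsub>T\<^esub> pB"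
    using car TG.l_cancel TG.m_closed by metis
  then have "pX \<otimes>\<^bsub>T\<^esub> s = s \<otimes>\<^bsub>T\<^esub> pY"
    using car TG.r_cancel TG.m_closed by metis
  then show ?thesis unfolding pX_def pY_def s_def .
qed

lemma conj_cancel2: "g \<in> carrier G \<Longrightarrow> x \<in> carrier G \<Longrightarrow> conj G g (conj G (inv g) x) = x"
  by (simp add: conj_def m_assoc)

lemma comm_N: "n \<in> N \<Longrightarrow> m \<in> M \<Longrightarrow> n \<otimes> m \<otimes> inv n \<otimes> inv m \<in> N"
proof -
  assume n: "n \<in> N" and m: "m \<in> M"
  have "n \<otimes> m \<otimes> inv n \<otimes> inv m = n \<otimes> conj G m (inv n)"
    using n m memb by (simp add: conj_def m_assoc)
  then show ?thesis using n m memb by metis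
qed

lemma comm_M: "n \<in> N \<Longrightarrow> m \<in> M \<Longrightarrow> n \<otimes> m \<otimes> inv n \<otimes> inv m \<in> M"
proof -
  assume n: "n \<in> N" and m: "m \<in> M"
  have "n \<otimes> m \<otimes> inv n \<otimes> inv m = conj G n m \<otimes> inv m"
    using n m memb by (simp add: conj_def m_assoc)
  then show ?thesis using n m memb by metis
qed

end

locale tctx2 = tctx +
  fixes e :: nat
  assumes ab: "\<And>x y. x \<in> N \<Longrightarrow> y \<in> N \<Longrightarrow> x \<otimes> y = y \<otimes> x"
    and e_pos: "0 < e" and e_ex: "\<And>x. x \<in> N \<Longrightarrow> x [^] e = \<one>"
begin

lemma conj_ab: "k \<in> N \<Longrightarrow> a \<in> N \<Longrightarrow> conj G k a = a"
  unfolding conj_def using ab[of k a] memb by (simp add: m_assoc)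

lemma F2:
  assumes n: "n \<in> N" and m: "m \<in> M" and a: "a \<in> N" and b: "b \<in> M"
  shows "t a (conj G (n \<otimes> m \<otimes> inv n \<otimes> inv m) b) \<otimes>\<^bsub>T\<^esub> t n m = t n m \<otimes>\<^bsub>T\<^esub> t a b"
proof -
  have c: "n \<in> carrier G" "m \<in> carrier G" "a \<in> carrier G" "b \<in> carrier G" using n m a b memb by auto
  define g where "g = inv (m \<otimes> n)"
  have gc: "g \<in> carrier G" unfolding g_def using c by simp
  have n': "conj G g a \<in> N" and m': "conj G g b \<in> M" using gc a b conj_N conj_M by auto
  have k: "n \<otimes> m \<otimes> g = n \<otimes> m \<otimes> inv n \<otimes> inv m" unfolding g_def using c by (simp add: inv_mult_group m_assoc)
  have kN: "n \<otimes> m \<otimes> inv n \<otimes> inv m \<in> N" using comm_N n m .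
  have e1: "conj G (n \<otimes> m) (conj G g a) = a"
    using c gc conj_mult[symmetric] k conj_ab[OF kN a] by (metis m_closed)
  have e2: "conj G (n \<otimes> m) (conj G g b) = conj G (n \<otimes> m \<otimes> inv n \<otimes> inv m) b"
    using c gc conj_mult[symmetric] k by (metis m_closed)
  have e3: "conj G (m \<otimes> n) (conj G g a) = a" "conj G (m \<otimes> n) (conj G g b) = b"
    unfolding g_def using c by (simp_all add: conj_cancel2)
  show ?thesis using GI[OF n m n' m'] e1 e2 e3 by simp
qed

lemma t_lin: "a \<in> N \<Longrightarrow> a' \<in> N \<Longrightarrow> d \<in> N \<Longrightarrow> d \<in> M \<Longrightarrow> t (a \<otimes> a') d = t a' d \<otimes>\<^bsub>T\<^esub> t a d"
  using TL[of a a' d] conj_ab by simp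

lemma t_pow: "a \<in> N \<Longrightarrow> d \<in> N \<Longrightarrow> d \<in> M \<Longrightarrow> t (a [^] (j::nat)) d = (t a d) [^]\<^bsub>T\<^esub> j"
proof (induction j)
  case 0 then show ?case using t_one by simp
next
  case (Suc j)
  have "t (a [^] Suc j) d = t (a [^] j \<otimes> a) d" by simp
  also have "\<dots> = t a d \<otimes>\<^bsub>T\<^esub> t (a [^] j) d" using t_lin Suc N_pow by simp
  also have "\<dots> = (t a d) [^]\<^bsub>T\<^esub> Suc j" using Suc t_car[of a d]
    by (simp only: TG.nat_pow_Suc2)
  finally show ?case .
qed

lemma t_exp: "a \<in> N \<Longrightarrow> d \<in> N \<Longrightarrow> d \<in> M \<Longrightarrow> (t a d) [^]\<^bsub>T\<^esub> e = \<one>\<^bsub>T\<^esub>"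
  using t_pow[of a d e] e_ex t_one by simp

lemma t_comm_S: "a \<in> N \<Longrightarrow> d \<in> N \<Longrightarrow> d \<in> M \<Longrightarrow> s \<in> S \<Longrightarrow> t a d \<otimes>\<^bsub>T\<^esub> s = s \<otimes>\<^bsub>T\<^esub> t a d"
proof -
  assume a: "a \<in> N" and d: "d \<in> N" "d \<in> M" and s: "s \<in> S"
  obtain x y where xy: "s = t x y" "x \<in> N" "y \<in> M" using s S_def by auto
  have "a \<otimes> d \<otimes> inv a \<otimes> inv d = \<one>" using ab[OF a d(1)] a d memb by (simp add: m_assoc)
  then have "t x y \<otimes>\<^bsub>T\<^esub> t a d = t a d \<otimes>\<^bsub>T\<^esub> t x y"
    using F2[OF a d(2) xy(2,3)] conj_one1 xy memb by simp
  then show ?thesis using xy by simp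
qed

lemma t_cent: "a \<in> N \<Longrightarrow> d \<in> N \<Longrightarrow> d \<in> M \<Longrightarrow> TG.cent (t a d)"
proof -
  assume h: "a \<in> N" "d \<in> N" "d \<in> M"
  have tc: "t a d \<in> carrier T" using h t_car by auto
  have "t a d \<otimes>\<^bsub>T\<^esub> y = y \<otimes>\<^bsub>T\<^esub> t a d" if "y \<in> carrier T" for y
    using that
  proof (induction y rule: gen_ind)
    case 1 then show ?case using tc by simp
  next
    case (2 s x)
    have sc: "s \<in> carrier T" using 2 S_sub by auto
    have "t a d \<otimes>\<^bsub>T\<^esub> (s \<otimes>\<^bsub>T\<^esub> x) = s \<otimes>\<^bsub>T\<^esub> t a d \<otimes>\<^bsub>T\<^esub> x"
      using t_comm_S[OF h 2(1)] tc sc 2 by (simp add: TG.m_assoc[symmetric])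
    also have "\<dots> = s \<otimes>\<^bsub>T\<^esub> x \<otimes>\<^bsub>T\<^esub> t a d" using 2 tc sc by (simp add: TG.m_assoc)
    finally show ?case .
  qed (use that in simp)
  then show ?thesis using tc TG.cent_def by auto
qed

lemma t_Zc: "a \<in> N \<Longrightarrow> d \<in> N \<Longrightarrow> d \<in> M \<Longrightarrow> TG.Zc e (t a d)"
  using t_cent t_exp TG.Zc_def by auto

lemma S_comm: "s \<in> S \<Longrightarrow> s' \<in> S \<Longrightarrow> TG.Zc e (s \<otimes>\<^bsub>T\<^esub> s' \<otimes>\<^bsub>T\<^esub> inv\<^bsub>T\<^esub> s \<otimes>\<^bsub>T\<^esub> inv\<^bsub>T\<^esub> s')"
proof -
  assume s: "s \<in> S" and s': "s' \<in> S"
  obtain n m where nm: "s = t n m" "n \<in> N" "m \<in> M" using s S_def by auto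
  obtain a b where ab': "s' = t a b" "a \<in> N" "b \<in> M" using s' S_def by auto
  define k where "k = n \<otimes> m \<otimes> inv n \<otimes> inv m"
  have kN: "k \<in> N" and kM: "k \<in> M" unfolding k_def using comm_N comm_M nm by auto
  have c: "n \<in> carrier G" "m \<in> carrier G" "a \<in> carrier G" "b \<in> carrier G" "k \<in> carrier G"
    using nm ab' kN memb by auto
  define d where "d = inv b \<otimes> conj G k b"
  have dM: "d \<in> M" unfolding d_def using ab' kN memb by auto
  have bd: "b \<otimes> d = conj G k b" unfolding d_def using c by (simp add: conj_c)
  define d' where "d' = k \<otimes> b \<otimes> inv k \<otimes> inv b"
  have cd: "conj G b d = d'" unfolding d_def d'_def using c by (simp add: conj_def m_assoc)
  have d'N: "d' \<in> N" and d'M: "d' \<in> M" unfolding d'_def using comm_N comm_M kN ab' by auto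
  have caN: "conj G b a \<in> N" using ab' c conj_N by auto
  define z where "z = t (conj G b a) d'"
  have zZ: "TG.Zc e z" unfolding z_def using t_Zc caN d'N d'M by auto
  have zc: "TG.cent z" using zZ TG.Zc_def by auto
  have zcar: "z \<in> carrier T" using zc TG.cent_def by auto
  have tkb: "t a (conj G k b) = t a b \<otimes>\<^bsub>T\<^esub> z"
    using TR[OF ab'(2,3) dM] bd cd unfolding z_def by simp
  have sc: "s \<in> carrier T" "s' \<in> carrier T" "t a b \<in> carrier T" using nm ab' t_car by auto
  have F: "t a (conj G k b) \<otimes>\<^bsub>T\<^esub> s = s \<otimes>\<^bsub>T\<^esub> s'" unfolding k_def using F2[OF nm(2,3) ab'(2,3)] nm ab' by simp
  have "s \<otimes>\<^bsub>T\<^esub> s' \<otimes>\<^bsub>T\<^esub> inv\<^bsub>T\<^esub> s = t a (conj G k b)"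
    using F[symmetric] sc tkb zcar by (simp add: TG.m_assoc)
  then have "s \<otimes>\<^bsub>T\<^esub> s' \<otimes>\<^bsub>T\<^esub> inv\<^bsub>T\<^esub> s \<otimes>\<^bsub>T\<^esub> inv\<^bsub>T\<^esub> s' = t a b \<otimes>\<^bsub>T\<^esub> z \<otimes>\<^bsub>T\<^esub> inv\<^bsub>T\<^esub> (t a b)"
    using tkb ab' by simp
  also have "\<dots> = z"
    using TG.cent_swap[OF zc, of "t a b" "inv\<^bsub>T\<^esub> (t a b)"] sc zcar
    by (simp add: TG.m_assoc)
  finally show ?thesis using zZ by simp
qed

definition uu where "uu n m' = t (conj G m' n) (n \<otimes> m' \<otimes> inv n \<otimes> inv m')"

lemma uu_Zc: "n \<in> N \<Longrightarrow> m' \<in> M \<Longrightarrow> TG.Zc e (uu n m')"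
  unfolding uu_def using t_Zc comm_N comm_M conj_N memb by auto

lemma g_step:
  assumes n: "n \<in> N" and m: "m' \<in> M"
  shows "t n (conj G n m') = t n m' \<otimes>\<^bsub>T\<^esub> uu n m'"
proof -
  have c: "n \<in> carrier G" "m' \<in> carrier G" using n m memb by auto
  define d where "d = inv m' \<otimes> conj G n m'"
  have dM: "d \<in> M" unfolding d_def using n m memb by auto
  have md: "m' \<otimes> d = conj G n m'" unfolding d_def using c by (simp add: conj_c)
  have cd: "conj G m' d = n \<otimes> m' \<otimes> inv n \<otimes> inv m'" unfolding d_def using c by (simp add: conj_def m_assoc)
  show ?thesis using TR[OF n m dM] md cd unfolding uu_def by simp
qed

lemma uu_inv:
  assumes n: "n \<in> N" and m: "m' \<in> M"
  shows "uu n (conj G n m') = uu n m'"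
proof -
  have c: "n \<in> carrier G" "m' \<in> carrier G" using n m memb by auto
  have "conj G (conj G n m') n = conj G n (conj G m' n)" using c by (simp add: conj_def m_assoc inv_mult_group)
  also have "\<dots> = conj G m' n" using conj_ab[OF n] conj_N[OF c(2) n] by simp
  finally have e1: "conj G (conj G n m') n = conj G m' n" .
  have "n \<otimes> conj G n m' \<otimes> inv n \<otimes> inv (conj G n m') = conj G n (n \<otimes> m' \<otimes> inv n \<otimes> inv m')"
    using c by (simp add: conj_def m_assoc inv_mult_group)
  also have "\<dots> = n \<otimes> m' \<otimes> inv n \<otimes> inv m'" using conj_ab[OF n comm_N[OF n m]] .
  finally show ?thesis unfolding uu_def using e1 by simp
qed

lemma conj_pow_Suc: "n \<in> carrier G \<Longrightarrow> m \<in> carrier G \<Longrightarrow> conj G (n [^] Suc j) m = conj G n (conj G (n [^] j) m)"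
proof -
  assume c: "n \<in> carrier G" "m \<in> carrier G"
  have "conj G (n [^] Suc j) m = conj G (n \<otimes> n [^] j) m" by (simp only: nat_pow_Suc2[OF c(1)])
  then show ?thesis using c conj_mult by simp
qed

lemma mj:
  assumes n: "n \<in> N" and m: "m \<in> M"
  shows "uu n (conj G (n [^] (j::nat)) m) = uu n m \<and> conj G (n [^] j) m \<in> M
     \<and> t n (conj G (n [^] j) m) = t n m \<otimes>\<^bsub>T\<^esub> (uu n m) [^]\<^bsub>T\<^esub> j"
proof (induction j)
  case 0 then show ?case using n m memb t_car by (simp add: conj_one1)
next
  case (Suc j)
  have c: "n \<in> carrier G" "m \<in> carrier G" using n m memb by auto
  let ?mj = "conj G (n [^] j) m"
  have mjM: "?mj \<in> M" using Suc by simp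
  have e: "conj G (n [^] Suc j) m = conj G n ?mj" using conj_pow_Suc c by blast
  have uc: "uu n m \<in> carrier T" using uu_Zc[OF n m] TG.Zc_def TG.cent_def by auto
  have "t n (conj G n ?mj) = t n ?mj \<otimes>\<^bsub>T\<^esub> uu n ?mj" using g_step[OF n mjM] .
  also have "\<dots> = t n m \<otimes>\<^bsub>T\<^esub> (uu n m) [^]\<^bsub>T\<^esub> j \<otimes>\<^bsub>T\<^esub> uu n m" using Suc by simp
  also have "\<dots> = t n m \<otimes>\<^bsub>T\<^esub> (uu n m) [^]\<^bsub>T\<^esub> Suc j" using uc t_car[OF n m] by (simp add: TG.m_assoc)
  finally show ?case using e Suc uu_inv[OF n mjM] conj_M[OF c(1) mjM] by simp
qed

lemma Fk:
  assumes n: "n \<in> N" and m: "m \<in> M"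
  shows "t (n [^] (k::nat)) m = (t n m) [^]\<^bsub>T\<^esub> k \<otimes>\<^bsub>T\<^esub> (uu n m) [^]\<^bsub>T\<^esub> (k * (k - 1) div 2)"
proof (induction k)
  case 0 then show ?case using t_one m by simp
next
  case (Suc k)
  have c: "n \<in> carrier G" "m \<in> carrier G" using n m memb by auto
  have uz: "TG.cent (uu n m)" using uu_Zc[OF n m] TG.Zc_def by auto
  have uc: "uu n m \<in> carrier T" using uz TG.cent_def by auto
  have tc: "t n m \<in> carrier T" using t_car n m by auto
  define U where "U = (uu n m) [^]\<^bsub>T\<^esub> (k * (k - 1) div 2)"
  have Uc: "U \<in> carrier T" unfolding U_def using uc by simp
  have ar: "Suc k * (Suc k - 1) div 2 = k + k * (k - 1) div 2" by (cases k) auto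
  have "t (n [^] Suc k) m = t (n [^] k \<otimes> n) m" by simp
  also have "\<dots> = t (conj G (n [^] k) n) (conj G (n [^] k) m) \<otimes>\<^bsub>T\<^esub> t (n [^] k) m"
    using TL[OF N_pow[OF n] n m] .
  also have "conj G (n [^] k) n = n" using conj_ab N_pow n by auto
  also have "t n (conj G (n [^] k) m) = t n m \<otimes>\<^bsub>T\<^esub> (uu n m) [^]\<^bsub>T\<^esub> k" using mj[OF n m] by blast
  also have "t (n [^] k) m = (t n m) [^]\<^bsub>T\<^esub> k \<otimes>\<^bsub>T\<^esub> U" using Suc U_def by simp
  also have "t n m \<otimes>\<^bsub>T\<^esub> (uu n m) [^]\<^bsub>T\<^esub> k \<otimes>\<^bsub>T\<^esub> ((t n m) [^]\<^bsub>T\<^esub> k \<otimes>\<^bsub>T\<^esub> U)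
      = t n m \<otimes>\<^bsub>T\<^esub> ((t n m) [^]\<^bsub>T\<^esub> k \<otimes>\<^bsub>T\<^esub> ((uu n m) [^]\<^bsub>T\<^esub> k \<otimes>\<^bsub>T\<^esub> U))"
    using TG.cent_swap[OF TG.cent_pow[OF uz, of k], of "(t n m) [^]\<^bsub>T\<^esub> k" U] tc uc Uc
    by (simp add: TG.m_assoc)
  also have "\<dots> = (t n m) [^]\<^bsub>T\<^esub> Suc k \<otimes>\<^bsub>T\<^esub> (uu n m) [^]\<^bsub>T\<^esub> (Suc k * (Suc k - 1) div 2)"
    unfolding ar U_def using tc uc
    by (simp add: TG.m_assoc[symmetric] TG.nat_pow_mult TG.nat_pow_Suc2[symmetric])
  finally show ?case .
qed

lemma gen_E:
  assumes n: "n \<in> N" and m: "m \<in> M" and dv: "e dvd (e * (e - 1) div 2 * r)"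
  shows "(t n m) [^]\<^bsub>T\<^esub> (e * r) = \<one>\<^bsub>T\<^esub>"
proof -
  have uz: "TG.Zc e (uu n m)" using uu_Zc[OF n m] .
  have uc: "uu n m \<in> carrier T" "TG.cent (uu n m)" "(uu n m) [^]\<^bsub>T\<^esub> e = \<one>\<^bsub>T\<^esub>"
    using uz TG.Zc_def TG.cent_def by auto
  have tc: "t n m \<in> carrier T" using t_car n m by auto
  define C where "C = e * (e - 1) div 2"
  have "\<one>\<^bsub>T\<^esub> = t (n [^] e) m" using e_ex[OF n] t_one[OF m] by simp
  also have "\<dots> = (t n m) [^]\<^bsub>T\<^esub> e \<otimes>\<^bsub>T\<^esub> (uu n m) [^]\<^bsub>T\<^esub> C" unfolding C_def by (rule Fk[OF n m])
  finally have one: "(t n m) [^]\<^bsub>T\<^esub> e \<otimes>\<^bsub>T\<^esub> (uu n m) [^]\<^bsub>T\<^esub> C = \<one>\<^bsub>T\<^esub>" by simp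
  have comm: "(t n m) [^]\<^bsub>T\<^esub> e \<otimes>\<^bsub>T\<^esub> (uu n m) [^]\<^bsub>T\<^esub> C = (uu n m) [^]\<^bsub>T\<^esub> C \<otimes>\<^bsub>T\<^esub> (t n m) [^]\<^bsub>T\<^esub> e"
    using TG.cent_pow[OF uc(2), of C] tc unfolding TG.cent_def by simp
  have "\<one>\<^bsub>T\<^esub> = ((t n m) [^]\<^bsub>T\<^esub> e \<otimes>\<^bsub>T\<^esub> (uu n m) [^]\<^bsub>T\<^esub> C) [^]\<^bsub>T\<^esub> r" using one by simp
  also have "\<dots> = ((t n m) [^]\<^bsub>T\<^esub> e) [^]\<^bsub>T\<^esub> r \<otimes>\<^bsub>T\<^esub> ((uu n m) [^]\<^bsub>T\<^esub> C) [^]\<^bsub>T\<^esub> r"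
    using TG.pow_mult_distrib[OF comm] tc uc by simp
  also obtain q where "C * r = e * q" using dv C_def by auto
  then have "((uu n m) [^]\<^bsub>T\<^esub> C) [^]\<^bsub>T\<^esub> r = \<one>\<^bsub>T\<^esub>"
    using uc TG.nat_pow_pow[OF uc(1), of e q] by (simp add: TG.nat_pow_pow)
  finally show ?thesis using tc by (simp add: TG.nat_pow_pow)
qed

lemma all_E:
  assumes r: "0 < r" and d1: "e dvd (e * (e - 1) div 2 * r)" and d2: "e dvd (e * r * (e * r - 1) div 2)"
  shows "group_exponent T dvd e * r"
proof -
  have all: "x [^]\<^bsub>T\<^esub> (e * r) = \<one>\<^bsub>T\<^esub>" if "x \<in> carrier T" for x
  proof (rule TG.exp_gen[OF S_sub _ _ _ d2 that])
    fix P :: "'a tword set \<Rightarrow> bool" and y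
    assume "P \<one>\<^bsub>T\<^esub>" "\<And>s x. s \<in> S \<Longrightarrow> x \<in> carrier T \<Longrightarrow> P x \<Longrightarrow> P (s \<otimes>\<^bsub>T\<^esub> x)" "y \<in> carrier T"
    then show "P y" by (rule gen_ind)
  next
    fix s s' assume "s \<in> S" "s' \<in> S"
    then show "TG.Zc e (s \<otimes>\<^bsub>T\<^esub> s' \<otimes>\<^bsub>T\<^esub> inv\<^bsub>T\<^esub> s \<otimes>\<^bsub>T\<^esub> inv\<^bsub>T\<^esub> s')" by (rule S_comm)
  next
    fix s assume "s \<in> S"
    then obtain n m where "s = t n m" "n \<in> N" "m \<in> M" unfolding S_def by auto
    then show "s [^]\<^bsub>T\<^esub> (e * r) = \<one>\<^bsub>T\<^esub>" using gen_E d1 by simp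
  qed
  show ?thesis by (rule TG.exp_dvd) (use e_pos r all in auto)
qed

lemma main_E: "(odd e \<longrightarrow> group_exponent T dvd e) \<and> (even e \<longrightarrow> group_exponent T dvd 2 * e)"
proof (intro conjI impI)
  assume o: "odd e"
  then obtain q where q: "e = 2 * q + 1" using oddE by blast
  have "e * (e - 1) div 2 = e * q" using q by simp
  then have d: "e dvd (e * (e - 1) div 2 * 1)" by simp
  show "group_exponent T dvd e" using all_E[of 1] d by simp
next
  assume "even e"
  have a1: "e * (e - 1) div 2 * 2 = e * (e - 1)"
  proof -
    have "2 dvd e * (e - 1)" using \<open>even e\<close> by simp
    then show ?thesis by (rule dvd_div_mult_self)
  qed
  have a2: "e * 2 * (e * 2 - 1) div 2 = e * (e * 2 - 1)" by simp
  have "group_exponent T dvd e * 2" using all_E[of 2] a1 a2 by simp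
  then show "group_exponent T dvd 2 * e" by (simp add: mult.commute)
qed

end


theorem lemma4p2:
  fixes G :: "('g, 'b) monoid_scheme" and N M :: "'g set"
  assumes "group G"
    and "N \<lhd> G" and "M \<lhd> G"
    and "\<forall>x\<in>N. \<forall>y\<in>N. x \<otimes>\<^bsub>G\<^esub> y = y \<otimes>\<^bsub>G\<^esub> x"
    and "\<exists>e>0. \<forall>x\<in>N. x [^]\<^bsub>G\<^esub> (e::nat) = \<one>\<^bsub>G\<^esub>"
  shows "(odd (group_exponent (G\<lparr>carrier := N\<rparr>)) \<longrightarrow>
            group_exponent (tensor_grp G N M) dvd group_exponent (G\<lparr>carrier := N\<rparr>))
       \<and> (even (group_exponent (G\<lparr>carrier := N\<rparr>)) \<longrightarrow>
            group_exponent (tensor_grp G N M) dvd 2 * group_exponent (G\<lparr>carrier := N\<rparr>))"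
proof -
  define e where "e = group_exponent (G\<lparr>carrier := N\<rparr>)"
  have pw: "x [^]\<^bsub>G\<lparr>carrier := N\<rparr>\<^esub> (k::nat) = x [^]\<^bsub>G\<^esub> k" for x k
    by (simp add: nat_pow_def)
  have ex: "\<exists>e::nat>0. \<forall>x\<in>carrier (G\<lparr>carrier := N\<rparr>). x [^]\<^bsub>G\<lparr>carrier := N\<rparr>\<^esub> e = \<one>\<^bsub>G\<lparr>carrier := N\<rparr>\<^esub>"
    using assms(5) by (simp add: pw)
  have L: "0 < e \<and> (\<forall>x\<in>N. x [^]\<^bsub>G\<^esub> e = \<one>\<^bsub>G\<^esub>)"
  proof -
    have "(LEAST e::nat. e > 0 \<and> (\<forall>x\<in>carrier (G\<lparr>carrier := N\<rparr>). x [^]\<^bsub>G\<lparr>carrier := N\<rparr>\<^esub> e = \<one>\<^bsub>G\<lparr>carrier := N\<rparr>\<^esub>)) > 0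
      \<and> (\<forall>x\<in>carrier (G\<lparr>carrier := N\<rparr>). x [^]\<^bsub>G\<lparr>carrier := N\<rparr>\<^esub> (LEAST e::nat. e > 0 \<and> (\<forall>x\<in>carrier (G\<lparr>carrier := N\<rparr>). x [^]\<^bsub>G\<lparr>carrier := N\<rparr>\<^esub> e = \<one>\<^bsub>G\<lparr>carrier := N\<rparr>\<^esub>)) = \<one>\<^bsub>G\<lparr>carrier := N\<rparr>\<^esub>)"
      by (rule LeastI_ex) (rule ex)
    then show ?thesis unfolding e_def group_exponent_def using ex by (simp add: pw)
  qed
  have t1: "tctx G N M" by (intro tctx.intro tctx_axioms.intro assms(1-3))
  have "tctx2 G N M e"
    by (intro tctx2.intro[OF t1] tctx2_axioms.intro) (use assms L in auto)
  then interpret tctx2 G N M e .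
  show ?thesis using main_E unfolding e_def by simp
qed

end
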